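(* Let $G=\langle\Sigma_\tau,Q,\rightarrow,Q^0\rangle$ be a nondeterministic automaton with secret states $Q^S\subseteq Q$, and assume $UR(Q^0)\not\subseteq Q^S$. Let $\sim_o$ be an opaque observation equivalence on $G$ and $\tilde G$ the quotient of $G$ modulo $\sim_o$ (with secret states $\{[x]\mid x\in Q^S\}$). Let $H_{ob}$ be the quotient of $det(\tilde G)$ modulo some opaque bisimulation $\approx_o$, and $H_b$ the quotient of $det(\tilde G)$ modulo some bisimulation equivalence $\approx$. Let $H_{obd}$ be the desired observer of $H_{ob}$, i.e., $H_{ob}$ with every class $[X]$ satisfying $X\subseteq\tilde Q^S$ deleted and only the reachable part kept. Let $T=TPO(det_d(G),det(G))$ and $T'=TPO(H_{obd},H_b)$ be the corresponding largest three-player observers. Then for every finite sequence $\omega$ of labels, $\omega$ labels a path starting at the initial state of $T$ if and only if $\omega$ labels a path starting at the initial state of $T'$.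
   Context: Automata: a (nondeterministic) automaton $G=\langle \Sigma_\tau,Q,\rightarrow,Q^0\rangle$ has finite observable alphabet $\Sigma$, special unobservable symbol $\tau\notin\Sigma$, $\Sigma_\tau=\Sigma\cup\{\tau\}$, transition relation $\rightarrow\subseteq Q\times\Sigma_\tau\times Q$ and initial states $Q^0$. Deterministic: one initial state, no $\tau$-transitions, functional transitions. $p\overset{s}{\Rightarrow}q$ ($s\in\Sigma^*$) means a path from $p$ to $q$ whose labels, with $\tau$'s deleted, spell $s$. $UR(B)=\{q\mid b\overset{\varepsilon}{\Rightarrow}q,\ b\in B\}$. The observer $det(G)$ is the deterministic automaton over $\Sigma$ with initial state $UR(Q^0)$ and $X\xrightarrow{\sigma}Y$ iff $Y=UR(\{y\mid x\xrightarrow{\sigma}y,\ x\in X\})\neq\emptyset$, restricted to reachable states. Given secret states $Q^S$, the desired observer $det_d(G)$ is $det(G)$ with all states $X\subseteq Q^S$ deleted and only the part reachable from the initial state kept. Quotient modulo an equivalence $\sim$: states are classes $[x]$, $[x]\xrightarrow{\sigma}[y]$ iff $x'\xrightarrow{\sigma}y'$ for some $x'\in[x],y'\in[y]$, initial states are classes of initial states. A bisimulation on an automaton is an equivalence $\approx$ such that $x_1\approx x_2$ and $x_1\xrightarrow{\sigma}y_1$ imply $x_2\xrightarrow{\sigma}y_2$ for some $y_2\approx y_1$. An opaque observation equivalence on $G$ is an equivalence $\sim_o$ on $Q$ such that $x_1\sim_o x_2$ implies (i) whenever $x_1\overset{s}{\Rightarrow}y_1$ ($s\in\Sigma^*$)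 there is $y_2\sim_o y_1$ with $x_2\overset{s}{\Rightarrow}y_2$, and (ii) $x_1\in Q^S\iff x_2\in Q^S$. An opaque bisimulation on $det(G)$ is an equivalence $\approx_o$ on its states such that $X_1\approx_o X_2$ implies (i) whenever $X_1\xrightarrow{s}Y_1$ there is $Y_2\approx_o Y_1$ with $X_2\xrightarrow{s}Y_2$, and (ii) $X_1\subseteq Q^S\iff X_2\subseteq Q^S$. Largest three-player observer: let $D=\langle\Sigma,X_D,\rightarrow_D,d_0\rangle$ and $F=\langle\Sigma,X_F,\rightarrow_F,f_0\rangle$ be deterministic automata. Let $\epsilon$ be a fresh symbol and $\Sigma^r=\{\sigma\to\epsilon\mid\sigma\in\Sigma\}$ a set of fresh "erasure" symbols. $TPO(D,F)$ is the labeled transition system whose states are of three types: $Y$-states $(d,f)\in X_D\times X_F$; $Z$-states $Z((d,f),e)$ with $e\in\Sigma$; $W$-states $W((d,f),a)$ with $a\in\Sigma\cup\Sigma^r$. Its initial state is the $Y$-state $(d_0,f_0)$, its states are those reachable from it, and its transitions are exactly: (1) $(d,f)\xrightarrow{e}Z((d,f),e)$ whenever $e$ is defined at $f$ in $F$; (2) $Z((d,f),e)\xrightarrow{\theta}Z((d',f),e)$ for $\theta\in\Sigma$ whenever $d\xrightarrow{\theta}_D d'$; (3) $Z((d,f),e)\xrightarrow{\epsilon}W((d,f),e)$ whenever $e$ is defined at $d$ in $D$ and at $f$ in $F$; (4) $Z((d,f),e)\xrightarrow{e\to\epsilon}W((d,f),e\to\epsilon)$ whenever $e$ is defined at $f$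 in $F$; (5) $W((d,f),e)\xrightarrow{e}(d',f')$ where $d\xrightarrow{e}_Dd'$ and $f\xrightarrow{e}_Ff'$; (6) $W((d,f),e\to\epsilon)\xrightarrow{e}(d,f')$ where $f\xrightarrow{e}_Ff'$. (The initial states of $D$ must exist, i.e., $D$ is nonempty.) *)

theory Defs
  imports Main
begin

text \<open>An automaton over observable alphabet of type 'a with states of type 'q.
  Transition labels are of type 'a option: None is the unobservable symbol tau,
  Some sigma is an observable symbol sigma.\<close>

record ('a, 'q) aut =
  aut_alph   :: "'a set"
  aut_states :: "'q set"
  aut_trans  :: "('q \<times> 'a option \<times> 'q) set"
  aut_init   :: "'q set"

definition automaton :: "('a, 'q) aut \<Rightarrow> bool" where
  "automaton G \<longleftrightarrow> finite (aut_alph G) \<and> finite (aut_states G)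
     \<and> aut_trans G \<subseteq> aut_states G \<times> (insert None (Some ` aut_alph G)) \<times> aut_states G
     \<and> aut_init G \<subseteq> aut_states G"

definition deterministic :: "('a, 'q) aut \<Rightarrow> bool" where
  "deterministic A \<longleftrightarrow> (\<exists>q0. aut_init A = {q0})
     \<and> (\<forall>p q. (p, None, q) \<notin> aut_trans A)
     \<and> (\<forall>p s q q'. (p, s, q) \<in> aut_trans A \<longrightarrow> (p, s, q') \<in> aut_trans A \<longrightarrow> q = q')"

inductive wtrans :: "('a, 'q) aut \<Rightarrow> 'q \<Rightarrow> 'a list \<Rightarrow> 'q \<Rightarrow> bool" for G where
  wt_refl: "wtrans G p [] p"
| wt_tau:  "(p, None, q) \<in> aut_trans G \<Longrightarrow> wtrans G q s r \<Longrightarrow> wtrans G p s r"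
| wt_vis:  "(p, Some \<sigma>, q) \<in> aut_trans G \<Longrightarrow> wtrans G q s r \<Longrightarrow> wtrans G p (\<sigma> # s) r"

inductive runs :: "('a, 'q) aut \<Rightarrow> 'q \<Rightarrow> 'a list \<Rightarrow> 'q \<Rightarrow> bool" for A where
  run_nil:  "runs A p [] p"
| run_cons: "(p, Some \<sigma>, q) \<in> aut_trans A \<Longrightarrow> runs A q s r \<Longrightarrow> runs A p (\<sigma> # s) r"

definition UR :: "('a, 'q) aut \<Rightarrow> 'q set \<Rightarrow> 'q set" where
  "UR G B = {q. \<exists>b\<in>B. (b, q) \<in> {(p, p'). (p, None, p') \<in> aut_trans G}\<^sup>*}"

definition det_init :: "('a, 'q) aut \<Rightarrow> 'q set" where
  "det_init G = UR G (aut_init G)"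

definition det_step :: "('a, 'q) aut \<Rightarrow> 'q set \<Rightarrow> 'a \<Rightarrow> 'q set" where
  "det_step G X \<sigma> = UR G {y. \<exists>x\<in>X. (x, Some \<sigma>, y) \<in> aut_trans G}"

inductive_set det_reach :: "('a, 'q) aut \<Rightarrow> 'q set set" for G where
  dr_init: "det_init G \<in> det_reach G"
| dr_step: "X \<in> det_reach G \<Longrightarrow> \<sigma> \<in> aut_alph G \<Longrightarrow> det_step G X \<sigma> \<noteq> {}
             \<Longrightarrow> det_step G X \<sigma> \<in> det_reach G"

definition det :: "('a, 'q) aut \<Rightarrow> ('a, 'q set) aut" where
  "det G = \<lparr> aut_alph = aut_alph G,
             aut_states = det_reach G,
             aut_trans = {(X, Some \<sigma>, det_step G X \<sigma>) | X \<sigma>.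
                            X \<in> det_reach G \<and> \<sigma> \<in> aut_alph G \<and> det_step G X \<sigma> \<noteq> {}},
             aut_init = {det_init G} \<rparr>"

inductive_set reach_within :: "('a, 'q) aut \<Rightarrow> 'q set \<Rightarrow> 'q set" for A K where
  rw_init: "x \<in> aut_init A \<Longrightarrow> x \<in> K \<Longrightarrow> x \<in> reach_within A K"
| rw_step: "x \<in> reach_within A K \<Longrightarrow> (x, l, y) \<in> aut_trans A \<Longrightarrow> y \<in> K
             \<Longrightarrow> y \<in> reach_within A K"

definition restrict_reach :: "('a, 'q) aut \<Rightarrow> 'q set \<Rightarrow> ('a, 'q) aut" where
  "restrict_reach A K = \<lparr> aut_alph = aut_alph A,
       aut_states = reach_within A K,
       aut_trans = {(x, l, y). (x, l, y) \<in> aut_trans A \<and> x \<in> reach_within A K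
                                 \<and> y \<in> reach_within A K},
       aut_init = aut_init A \<inter> reach_within A K \<rparr>"

definition det_d :: "('a, 'q) aut \<Rightarrow> 'q set \<Rightarrow> ('a, 'q set) aut" where
  "det_d G QS = restrict_reach (det G) {X. \<not> X \<subseteq> QS}"

definition quotient :: "('a, 'q) aut \<Rightarrow> ('q \<times> 'q) set \<Rightarrow> ('a, 'q set) aut" where
  "quotient A R = \<lparr> aut_alph = aut_alph A,
       aut_states = aut_states A // R,
       aut_trans = {(R `` {x}, l, R `` {y}) | x l y. (x, l, y) \<in> aut_trans A},
       aut_init = {R `` {x} | x. x \<in> aut_init A} \<rparr>"

definition bisimulation :: "('a, 'q) aut \<Rightarrow> ('q \<times> 'q) set \<Rightarrow> bool" where
  "bisimulation A R \<longleftrightarrow> equiv (aut_states A) R \<and>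
     (\<forall>x1 x2 \<sigma> y1. (x1, x2) \<in> R \<longrightarrow> (x1, \<sigma>, y1) \<in> aut_trans A \<longrightarrow>
        (\<exists>y2. (x2, \<sigma>, y2) \<in> aut_trans A \<and> (y2, y1) \<in> R))"

definition opaque_obs_equiv :: "('a, 'q) aut \<Rightarrow> 'q set \<Rightarrow> ('q \<times> 'q) set \<Rightarrow> bool" where
  "opaque_obs_equiv G QS R \<longleftrightarrow> equiv (aut_states G) R \<and>
     (\<forall>x1 x2. (x1, x2) \<in> R \<longrightarrow>
        (\<forall>s y1. wtrans G x1 s y1 \<longrightarrow> (\<exists>y2. (y2, y1) \<in> R \<and> wtrans G x2 s y2))
        \<and> (x1 \<in> QS \<longleftrightarrow> x2 \<in> QS))"

definition opaque_bisim :: "('a, 'q set) aut \<Rightarrow> 'q set \<Rightarrow> ('q set \<times> 'q set) set \<Rightarrow> bool" where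
  "opaque_bisim A QS R \<longleftrightarrow> equiv (aut_states A) R \<and>
     (\<forall>X1 X2. (X1, X2) \<in> R \<longrightarrow>
        (\<forall>s Y1. runs A X1 s Y1 \<longrightarrow> (\<exists>Y2. (Y2, Y1) \<in> R \<and> runs A X2 s Y2))
        \<and> (X1 \<subseteq> QS \<longleftrightarrow> X2 \<subseteq> QS))"

datatype 'a tlabel = TSym 'a | TEps | TErase 'a  \<comment> \<open>TErase e is the symbol e \<rightarrow> \<epsilon>\<close>

datatype ('d, 'f, 'a) tstate =
    TY 'd 'f
  | TZ 'd 'f 'a
  | TWs 'd 'f 'a         \<comment> \<open>W((d,f),e), e in Sigma\<close>
  | TWr 'd 'f 'a         \<comment> \<open>W((d,f),e \<rightarrow> \<epsilon>)\<close>

inductive tpo_step :: "('a, 'd) aut \<Rightarrow> ('a, 'f) aut \<Rightarrow>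
    ('d, 'f, 'a) tstate \<Rightarrow> 'a tlabel \<Rightarrow> ('d, 'f, 'a) tstate \<Rightarrow> bool" for D F where
  t1: "(\<exists>f'. (f, Some e, f') \<in> aut_trans F) \<Longrightarrow> tpo_step D F (TY d f) (TSym e) (TZ d f e)"
| t2: "(d, Some \<theta>, d') \<in> aut_trans D \<Longrightarrow> tpo_step D F (TZ d f e) (TSym \<theta>) (TZ d' f e)"
| t3: "(\<exists>d'. (d, Some e, d') \<in> aut_trans D) \<Longrightarrow> (\<exists>f'. (f, Some e, f') \<in> aut_trans F)
        \<Longrightarrow> tpo_step D F (TZ d f e) TEps (TWs d f e)"
| t4: "(\<exists>f'. (f, Some e, f') \<in> aut_trans F) \<Longrightarrow> tpo_step D F (TZ d f e) (TErase e) (TWr d f e)"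
| t5: "(d, Some e, d') \<in> aut_trans D \<Longrightarrow> (f, Some e, f') \<in> aut_trans F
        \<Longrightarrow> tpo_step D F (TWs d f e) (TSym e) (TY d' f')"
| t6: "(f, Some e, f') \<in> aut_trans F \<Longrightarrow> tpo_step D F (TWr d f e) (TSym e) (TY d f')"

inductive tpo_path :: "('a, 'd) aut \<Rightarrow> ('a, 'f) aut \<Rightarrow>
    ('d, 'f, 'a) tstate \<Rightarrow> 'a tlabel list \<Rightarrow> ('d, 'f, 'a) tstate \<Rightarrow> bool" for D F where
  tp_nil:  "tpo_path D F s [] s"
| tp_cons: "tpo_step D F s l s' \<Longrightarrow> tpo_path D F s' w s'' \<Longrightarrow> tpo_path D F s (l # w) s''"

definition tpo_paths :: "('a, 'd) aut \<Rightarrow> ('a, 'f) aut \<Rightarrow> 'a tlabel list set" where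
  "tpo_paths D F = {w. \<exists>d0\<in>aut_init D. \<exists>f0\<in>aut_init F. \<exists>s. tpo_path D F (TY d0 f0) w s}"

end

theory Submission
  imports Defs
begin


definition simrel :: "('a,'d) aut \<Rightarrow> ('a,'e) aut \<Rightarrow> ('d \<times> 'e) set \<Rightarrow> bool" where
  "simrel D D' S \<longleftrightarrow> (\<forall>d d' \<sigma> e. (d,d')\<in>S \<longrightarrow> (d, Some \<sigma>, e) \<in> aut_trans D \<longrightarrow>
      (\<exists>e'. (d', Some \<sigma>, e') \<in> aut_trans D' \<and> (e,e')\<in>S))"

fun trel :: "('d \<times> 'd2) set \<Rightarrow> ('f \<times> 'f2) set \<Rightarrow> ('d,'f,'a) tstate \<Rightarrow> ('d2,'f2,'a) tstate \<Rightarrow> bool" where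
  "trel S1 S2 (TY d f) (TY d' f') = ((d,d')\<in>S1 \<and> (f,f')\<in>S2)"
| "trel S1 S2 (TZ d f e) (TZ d' f' e') = ((d,d')\<in>S1 \<and> (f,f')\<in>S2 \<and> e = e')"
| "trel S1 S2 (TWs d f e) (TWs d' f' e') = ((d,d')\<in>S1 \<and> (f,f')\<in>S2 \<and> e = e')"
| "trel S1 S2 (TWr d f e) (TWr d' f' e') = ((d,d')\<in>S1 \<and> (f,f')\<in>S2 \<and> e = e')"
| "trel S1 S2 _ _ = False"

lemma tpo_step_sim:
  assumes "tpo_step D F s l t" "trel S1 S2 s s'" "simrel D D' S1" "simrel F F' S2"
  shows "\<exists>t'. tpo_step D' F' s' l t' \<and> trel S1 S2 t t'"
  using assms(1)
proof cases
  case (t1 f e d)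
  then obtain d' f' where s': "s' = TY d' f'" "(d,d')\<in>S1" "(f,f')\<in>S2" using assms(2)
    by (cases s') auto
  from t1 obtain g where "(f, Some e, g) \<in> aut_trans F" by auto
  with assms(4) s' obtain g' where "(f', Some e, g') \<in> aut_trans F'" unfolding simrel_def by blast
  hence "tpo_step D' F' s' l (TZ d' f' e)" using s' t1 by (auto intro: tpo_step.t1)
  thus ?thesis using s' t1 by auto
next
  case (t2 d \<theta> d2 f e)
  then obtain d' f' where s': "s' = TZ d' f' e" "(d,d')\<in>S1" "(f,f')\<in>S2" using assms(2)
    by (cases s') auto
  with assms(3) t2 obtain d2' where "(d', Some \<theta>, d2') \<in> aut_trans D'" "(d2,d2')\<in>S1" unfolding simrel_def by blast
  thus ?thesis using s' t2 by (auto intro: tpo_step.t2)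
next
  case (t3 d e f)
  then obtain d' f' where s': "s' = TZ d' f' e" "(d,d')\<in>S1" "(f,f')\<in>S2" using assms(2)
    by (cases s') auto
  from t3 obtain g h where "(f, Some e, g) \<in> aut_trans F" "(d, Some e, h) \<in> aut_trans D" by auto
  with assms(3,4) s' obtain g' h' where "(f', Some e, g') \<in> aut_trans F'" "(d', Some e, h') \<in> aut_trans D'"
    unfolding simrel_def by blast
  hence "tpo_step D' F' s' l (TWs d' f' e)" using s' t3 by (auto intro!: tpo_step.t3)
  thus ?thesis using s' t3 by auto
next
  case (t4 f e d)
  then obtain d' f' where s': "s' = TZ d' f' e" "(d,d')\<in>S1" "(f,f')\<in>S2" using assms(2)
    by (cases s') auto
  from t4 obtain g where "(f, Some e, g) \<in> aut_trans F" by auto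
  with assms(4) s' obtain g' where "(f', Some e, g') \<in> aut_trans F'" unfolding simrel_def by blast
  hence "tpo_step D' F' s' l (TWr d' f' e)" using s' t4 by (auto intro!: tpo_step.t4)
  thus ?thesis using s' t4 by auto
next
  case (t5 d e d2 f f2)
  then obtain d' f' where s': "s' = TWs d' f' e" "(d,d')\<in>S1" "(f,f')\<in>S2" using assms(2)
    by (cases s') auto
  with assms(3,4) t5 obtain d2' f2' where "(d', Some e, d2') \<in> aut_trans D'" "(d2,d2')\<in>S1"
     "(f', Some e, f2') \<in> aut_trans F'" "(f2,f2')\<in>S2" unfolding simrel_def by meson
  thus ?thesis using s' t5 by (auto intro: tpo_step.t5)
next
  case (t6 f e f2 d)
  then obtain d' f' where s': "s' = TWr d' f' e" "(d,d')\<in>S1" "(f,f')\<in>S2" using assms(2)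
    by (cases s') auto
  with assms(4) t6 obtain f2' where
     "(f', Some e, f2') \<in> aut_trans F'" "(f2,f2')\<in>S2" unfolding simrel_def by meson
  thus ?thesis using s' t6 by (auto intro: tpo_step.t6)
qed

lemma tpo_path_sim:
  assumes "tpo_path D F s w t" "trel S1 S2 s s'" "simrel D D' S1" "simrel F F' S2"
  shows "\<exists>t'. tpo_path D' F' s' w t'"
  using assms(1,2)
proof (induction arbitrary: s' rule: tpo_path.induct)
  case (tp_nil s)
  then show ?case by (auto intro: tpo_path.tp_nil)
next
  case (tp_cons s l s2 w s3)
  then obtain t' where "tpo_step D' F' s' l t'" "trel S1 S2 s2 t'"
    using tpo_step_sim assms(3,4) by blast
  with tp_cons show ?case by (meson tpo_path.tp_cons)
qed

lemma tpo_paths_sim: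
  assumes "simrel D D' S1" "simrel F F' S2"
    and "\<forall>d\<in>aut_init D. \<exists>d'\<in>aut_init D'. (d,d')\<in>S1"
    and "\<forall>f\<in>aut_init F. \<exists>f'\<in>aut_init F'. (f,f')\<in>S2"
  shows "tpo_paths D F \<subseteq> tpo_paths D' F'"
proof
  fix w assume "w \<in> tpo_paths D F"
  then obtain d0 f0 s where "d0\<in>aut_init D" "f0\<in>aut_init F" "tpo_path D F (TY d0 f0) w s"
    unfolding tpo_paths_def by blast
  moreover obtain d0' f0' where "d0'\<in>aut_init D'" "f0'\<in>aut_init F'" "(d0,d0')\<in>S1" "(f0,f0')\<in>S2"
    using assms(3,4) calculation by blast
  ultimately show "w \<in> tpo_paths D' F'" unfolding tpo_paths_def
    using tpo_path_sim[OF _ _ assms(1,2), of "TY d0 f0" w s "TY d0' f0'"] by auto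
qed



lemma runs_single: "runs A X [\<sigma>] Y \<longleftrightarrow> (X, Some \<sigma>, Y) \<in> aut_trans A"
proof
  assume "runs A X [\<sigma>] Y"
  thus "(X, Some \<sigma>, Y) \<in> aut_trans A"
    by (auto elim: runs.cases)
next
  assume "(X, Some \<sigma>, Y) \<in> aut_trans A"
  thus "runs A X [\<sigma>] Y" by (meson runs.run_cons runs.run_nil)
qed

lemma wtrans_nil_tau: "wtrans G p s r \<Longrightarrow> s = [] \<Longrightarrow> (p, r) \<in> {(p, p'). (p, None, p') \<in> aut_trans G}\<^sup>*"
  by (induction rule: wtrans.induct) (auto intro: converse_rtrancl_into_rtrancl)

lemma wtrans_single: "wtrans G p s r \<Longrightarrow> s = [\<sigma>] \<Longrightarrow>
   \<exists>a b. (p, a) \<in> {(p, p'). (p, None, p') \<in> aut_trans G}\<^sup>* \<and> (a, Some \<sigma>, b) \<in> aut_trans G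
     \<and> (b, r) \<in> {(p, p'). (p, None, p') \<in> aut_trans G}\<^sup>*"
proof (induction rule: wtrans.induct)
  case (wt_refl p) then show ?case by simp
next
  case (wt_tau p q s r)
  then show ?case by (meson case_prodI converse_rtrancl_into_rtrancl mem_Collect_eq)
next
  case (wt_vis p \<sigma>' q s r)
  then show ?case using wtrans_nil_tau by fastforce
qed

lemma UR_mono: "A \<subseteq> B \<Longrightarrow> UR G A \<subseteq> UR G B"
  unfolding UR_def by auto

lemma UR_incl: "A \<subseteq> UR G A"
  unfolding UR_def by auto

lemma UR_idem: "UR G (UR G A) = UR G A"
  unfolding UR_def by (auto intro: rtrancl_trans)

lemma UR_states: assumes "automaton G" "B \<subseteq> aut_states G" shows "UR G B \<subseteq> aut_states G"
proof
  fix q assume "q \<in> UR G B"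
  then obtain b where b: "b \<in> B" "(b, q) \<in> {(p, p'). (p, None, p') \<in> aut_trans G}\<^sup>*"
    unfolding UR_def by auto
  from b(2) show "q \<in> aut_states G"
  proof (induction rule: rtrancl_induct)
    case base then show ?case using b(1) assms(2) by auto
  next
    case (step y z) then show ?case using assms(1) unfolding automaton_def by auto
  qed
qed

lemma det_reach_props: assumes "automaton G" "X \<in> det_reach G"
  shows "X \<subseteq> aut_states G \<and> UR G X = X"
  using assms(2)
proof (induction rule: det_reach.induct)
  case dr_init
  have "aut_init G \<subseteq> aut_states G" using assms(1) unfolding automaton_def by auto
  then show ?case using UR_states[OF assms(1)] unfolding det_init_def
    by (simp add: UR_idem)
next
  case (dr_step X \<sigma>)
  have "{y. \<exists>x\<in>X. (x, Some \<sigma>, y) \<in> aut_trans G} \<subseteq> aut_states G"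
    using assms(1) unfolding automaton_def by auto
  then show ?case using UR_states[OF assms(1)] unfolding det_step_def by (simp add: UR_idem)
qed

context
  fixes G :: "('a, 'q) aut" and QS :: "'q set" and R :: "('q \<times> 'q) set"
  assumes aut: "automaton G" and QSs: "QS \<subseteq> aut_states G"
    and oe: "opaque_obs_equiv G QS R"
begin

abbreviation "phi X \<equiv> (\<lambda>x. R `` {x}) ` X"

lemma eqv: "equiv (aut_states G) R" using oe unfolding opaque_obs_equiv_def by auto

lemma cls_eq: "x \<in> aut_states G \<Longrightarrow> y \<in> aut_states G \<Longrightarrow> R `` {x} = R `` {y} \<longleftrightarrow> (x, y) \<in> R"
  using eq_equiv_class_iff[OF eqv] by blast

lemma trans_states: "(x, l, y) \<in> aut_trans G \<Longrightarrow> x \<in> aut_states G \<and> y \<in> aut_states G"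
  using aut unfolding automaton_def by auto

lemma R_states: "(x, y) \<in> R \<Longrightarrow> x \<in> aut_states G \<and> y \<in> aut_states G"
  using eqv unfolding equiv_def refl_on_def by auto

lemma UR_quot: assumes "B \<subseteq> aut_states G"
  shows "UR (quotient G R) (phi B) = phi (UR G B)"
proof
  show "phi (UR G B) \<subseteq> UR (quotient G R) (phi B)"
  proof
    fix c assume "c \<in> phi (UR G B)"
    then obtain b q where b: "b \<in> B" "(b, q) \<in> {(p, p'). (p, None, p') \<in> aut_trans G}\<^sup>*" "c = R``{q}"
      unfolding UR_def by auto
    from b(2) have "(R``{b}, R``{q}) \<in> {(p, p'). (p, None, p') \<in> aut_trans (quotient G R)}\<^sup>*"
    proof (induction rule: rtrancl_induct)
      case base then show ?case by simp
    next
      case (step y z)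
      then have "(R``{y}, None, R``{z}) \<in> aut_trans (quotient G R)"
        unfolding quotient_def by auto
      with step show ?case by (auto intro: rtrancl_into_rtrancl)
    qed
    then show "c \<in> UR (quotient G R) (phi B)" using b unfolding UR_def by auto
  qed
next
  show "UR (quotient G R) (phi B) \<subseteq> phi (UR G B)"
  proof
    fix c assume "c \<in> UR (quotient G R) (phi B)"
    then obtain b where b: "b \<in> B" "(R``{b}, c) \<in> {(p, p'). (p, None, p') \<in> aut_trans (quotient G R)}\<^sup>*"
      unfolding UR_def by auto
    from b(2) have "\<exists>q. (b, q) \<in> {(p, p'). (p, None, p') \<in> aut_trans G}\<^sup>* \<and> c = R``{q}"
    proof (induction rule: rtrancl_induct)
      case base then show ?case by auto
    next
      case (step c c2)
      then obtain q where q: "(b, q) \<in> {(p, p'). (p, None, p') \<in> aut_trans G}\<^sup>*" "c = R``{q}" by auto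
      from step(2) obtain x y where xy: "c = R``{x}" "c2 = R``{y}" "(x, None, y) \<in> aut_trans G"
        unfolding quotient_def by auto
      have qs: "q \<in> aut_states G" using UR_states[OF aut assms] q(1) b(1) unfolding UR_def by auto
      have xs: "x \<in> aut_states G" "y \<in> aut_states G" using trans_states xy(3) by auto
      have "(x, q) \<in> R" using cls_eq[OF xs(1) qs] q(2) xy(1) by simp
      moreover have "wtrans G x [] y" using xy(3) by (meson wtrans.wt_refl wtrans.wt_tau)
      ultimately obtain y2 where y2: "(y2, y) \<in> R" "wtrans G q [] y2"
        using oe unfolding opaque_obs_equiv_def by blast
      have "R``{y2} = R``{y}" using equiv_class_eq[OF eqv y2(1)] .
      moreover have "(b, y2) \<in> {(p, p'). (p, None, p') \<in> aut_trans G}\<^sup>*"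
        using q(1) wtrans_nil_tau[OF y2(2)] by (meson rtrancl_trans)
      ultimately show ?case using xy(2) by auto
    qed
    then show "c \<in> phi (UR G B)" using b(1) unfolding UR_def by auto
  qed
qed

lemma step_quot: assumes "X \<subseteq> aut_states G" "UR G X = X"
  shows "det_step (quotient G R) (phi X) \<sigma> = phi (det_step G X \<sigma>)"
proof -
  let ?P = "{y. \<exists>x\<in>X. (x, Some \<sigma>, y) \<in> aut_trans G}"
  let ?PQ = "{y. \<exists>x\<in>phi X. (x, Some \<sigma>, y) \<in> aut_trans (quotient G R)}"
  have Ps: "?P \<subseteq> aut_states G" using trans_states by auto
  have URPs: "UR G ?P \<subseteq> aut_states G" using UR_states[OF aut Ps] .
  have 1: "phi ?P \<subseteq> ?PQ" unfolding quotient_def by auto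
  have 2: "?PQ \<subseteq> phi (UR G ?P)"
  proof
    fix c assume "c \<in> ?PQ"
    then obtain x0 x y where xy: "x0 \<in> X" "R``{x0} = R``{x}" "c = R``{y}" "(x, Some \<sigma>, y) \<in> aut_trans G"
      unfolding quotient_def by auto
    have xs: "x \<in> aut_states G" "y \<in> aut_states G" using trans_states xy(4) by auto
    have x0s: "x0 \<in> aut_states G" using xy(1) assms(1) by blast
    have "(x, x0) \<in> R" using cls_eq[OF xs(1) x0s] xy(2) by simp
    moreover have "wtrans G x [\<sigma>] y" using xy(4) by (meson wtrans.wt_refl wtrans.wt_vis)
    ultimately obtain y2 where y2: "(y2, y) \<in> R" "wtrans G x0 [\<sigma>] y2"
      using oe unfolding opaque_obs_equiv_def by blast
    then obtain a b where ab: "(x0, a) \<in> {(p, p'). (p, None, p') \<in> aut_trans G}\<^sup>*"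
      "(a, Some \<sigma>, b) \<in> aut_trans G" "(b, y2) \<in> {(p, p'). (p, None, p') \<in> aut_trans G}\<^sup>*"
      using wtrans_single[OF y2(2) refl] by blast
    have "a \<in> UR G X" using ab(1) xy(1) unfolding UR_def by auto
    hence "a \<in> X" using assms(2) by simp
    hence "b \<in> ?P" using ab(2) by auto
    hence "y2 \<in> UR G ?P" using ab(3) unfolding UR_def by auto
    moreover have "R``{y2} = R``{y}" using equiv_class_eq[OF eqv y2(1)] .
    ultimately show "c \<in> phi (UR G ?P)" using xy(3) by auto
  qed
  have "det_step (quotient G R) (phi X) \<sigma> = UR (quotient G R) ?PQ" unfolding det_step_def by simp
  also have "\<dots> = phi (UR G ?P)"
  proof
    have "UR (quotient G R) ?PQ \<subseteq> UR (quotient G R) (phi (UR G ?P))" by (rule UR_mono[OF 2])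
    also have "\<dots> = phi (UR G (UR G ?P))" by (rule UR_quot[OF URPs])
    also have "\<dots> = phi (UR G ?P)" by (simp only: UR_idem)
    finally show "UR (quotient G R) ?PQ \<subseteq> phi (UR G ?P)" .
    have "phi (UR G ?P) = UR (quotient G R) (phi ?P)" by (rule UR_quot[OF Ps, symmetric])
    also have "\<dots> \<subseteq> UR (quotient G R) ?PQ" by (rule UR_mono[OF 1])
    finally show "phi (UR G ?P) \<subseteq> UR (quotient G R) ?PQ" .
  qed
  finally show ?thesis unfolding det_step_def by simp
qed

lemma init_quot: "det_init (quotient G R) = phi (det_init G)"
proof -
  have "aut_init (quotient G R) = phi (aut_init G)" unfolding quotient_def by auto
  moreover have "aut_init G \<subseteq> aut_states G" using aut unfolding automaton_def by auto
  ultimately show ?thesis unfolding det_init_def using UR_quot by simp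
qed

lemma alph_quot: "aut_alph (quotient G R) = aut_alph G" unfolding quotient_def by simp

lemma step_quot': "X \<in> det_reach G \<Longrightarrow> det_step (quotient G R) (phi X) \<sigma> = phi (det_step G X \<sigma>)"
proof -
  assume "X \<in> det_reach G"
  from det_reach_props[OF aut this] show ?thesis using step_quot by simp
qed

lemma reach_quot: "det_reach (quotient G R) = phi ` det_reach G"
proof
  show "phi ` det_reach G \<subseteq> det_reach (quotient G R)"
  proof
    fix Y assume "Y \<in> phi ` det_reach G"
    then obtain X where X: "X \<in> det_reach G" "Y = phi X" by auto
    from X(1) have "phi X \<in> det_reach (quotient G R)"
    proof (induction rule: det_reach.induct)
      case dr_init then show ?case using init_quot det_reach.dr_init[of "quotient G R"] by simp
    next
      case (dr_step X \<sigma>)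
      have e: "det_step (quotient G R) (phi X) \<sigma> = phi (det_step G X \<sigma>)" by (rule step_quot'[OF dr_step(1)])
      have "det_step (quotient G R) (phi X) \<sigma> \<in> det_reach (quotient G R)"
        apply (rule det_reach.dr_step[OF dr_step(4)])
        using dr_step(2,3) e alph_quot by auto
      then show ?case using e by simp
    qed
    then show "Y \<in> det_reach (quotient G R)" using X by simp
  qed
next
  show "det_reach (quotient G R) \<subseteq> phi ` det_reach G"
  proof
    fix Y assume "Y \<in> det_reach (quotient G R)"
    then show "Y \<in> phi ` det_reach G"
    proof (induction rule: det_reach.induct)
      case dr_init then show ?case using init_quot det_reach.dr_init[of G] by simp
    next
      case (dr_step Y \<sigma>)
      then obtain X where X: "X \<in> det_reach G" "Y = phi X" by auto
      have e: "det_step (quotient G R) Y \<sigma> = phi (det_step G X \<sigma>)" using step_quot'[OF X(1)] X(2) by simp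
      have "det_step G X \<sigma> \<in> det_reach G"
        apply (rule det_reach.dr_step[OF X(1)])
        using dr_step(2,3) e alph_quot by auto
      then show ?case using e by simp
    qed
  qed
qed

lemma secret_quot: assumes "X \<subseteq> aut_states G"
  shows "phi X \<subseteq> {R `` {x} | x. x \<in> QS} \<longleftrightarrow> X \<subseteq> QS"
proof
  assume h: "phi X \<subseteq> {R `` {x} | x. x \<in> QS}"
  show "X \<subseteq> QS"
  proof
    fix x assume "x \<in> X"
    hence "R``{x} \<in> {R `` {x} | x. x \<in> QS}" using h by blast
    then obtain q where q: "q \<in> QS" "R``{x} = R``{q}" by blast
    have "x \<in> aut_states G" "q \<in> aut_states G" using assms QSs q(1) \<open>x \<in> X\<close> by auto
    hence "(x, q) \<in> R" using cls_eq q(2) by simp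
    thus "x \<in> QS" using oe q(1) unfolding opaque_obs_equiv_def by blast
  qed
next
  assume "X \<subseteq> QS"
  thus "phi X \<subseteq> {R `` {x} | x. x \<in> QS}" by blast
qed

end


definition stepbis :: "('a, 's) aut \<Rightarrow> ('s \<times> 's) set \<Rightarrow> bool" where
  "stepbis A S \<longleftrightarrow> equiv (aut_states A) S \<and>
     (\<forall>x1 x2 \<sigma> y1. (x1, x2) \<in> S \<longrightarrow> (x1, Some \<sigma>, y1) \<in> aut_trans A \<longrightarrow>
        (\<exists>y2. (x2, Some \<sigma>, y2) \<in> aut_trans A \<and> (y2, y1) \<in> S))"

lemma bisim_stepbis: "bisimulation A S \<Longrightarrow> stepbis A S"
  unfolding bisimulation_def stepbis_def by simp

lemma obisim_stepbis: assumes "opaque_bisim A QS S" shows "stepbis A S"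
  unfolding stepbis_def
proof (intro conjI allI impI)
  show "equiv (aut_states A) S" using assms unfolding opaque_bisim_def by blast
next
  fix x1 x2 \<sigma> y1 assume h: "(x1, x2) \<in> S" "(x1, Some \<sigma>, y1) \<in> aut_trans A"
  hence "runs A x1 [\<sigma>] y1" using runs_single[of A x1 \<sigma> y1] by simp
  then obtain y2 where "(y2, y1) \<in> S" "runs A x2 [\<sigma>] y2"
    using assms h(1) unfolding opaque_bisim_def by blast
  thus "\<exists>y2. (x2, Some \<sigma>, y2) \<in> aut_trans A \<and> (y2, y1) \<in> S" using runs_single[of A x2 \<sigma> y2] by blast
qed

lemma quot_trans_iff: "(C, l, C') \<in> aut_trans (quotient A S) \<longleftrightarrow>
    (\<exists>x y. C = S``{x} \<and> C' = S``{y} \<and> (x, l, y) \<in> aut_trans A)"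
  unfolding quotient_def by auto

lemma quot_init: "aut_init (quotient A S) = (\<lambda>x. S``{x}) ` aut_init A"
  unfolding quotient_def by auto

lemma quot_fwd: "(x, l, y) \<in> aut_trans A \<Longrightarrow> (S``{x}, l, S``{y}) \<in> aut_trans (quotient A S)"
  unfolding quot_trans_iff by blast

lemma quot_back:
  assumes "stepbis A S" "x \<in> aut_states A"
    and ts: "\<forall>x l y. (x, l, y) \<in> aut_trans A \<longrightarrow> x \<in> aut_states A"
    and "(S``{x}, Some \<sigma>, C') \<in> aut_trans (quotient A S)"
  shows "\<exists>y. (x, Some \<sigma>, y) \<in> aut_trans A \<and> C' = S``{y}"
proof -
  obtain x1 y1 where h: "S``{x} = S``{x1}" "C' = S``{y1}" "(x1, Some \<sigma>, y1) \<in> aut_trans A"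
    using assms(4) unfolding quot_trans_iff by blast
  have eq: "equiv (aut_states A) S" using assms(1) unfolding stepbis_def by blast
  have x1s: "x1 \<in> aut_states A" using ts h(3) by blast
  have "(x, x1) \<in> S" using eq_equiv_class_iff[OF eq assms(2) x1s] h(1) by simp
  moreover have "sym S" using eq by (auto elim: equivE)
  ultimately have "(x1, x) \<in> S" by (rule symD[rotated])
  then obtain y2 where "(x, Some \<sigma>, y2) \<in> aut_trans A" "(y2, y1) \<in> S"
    using assms(1) h(3) unfolding stepbis_def by blast
  moreover have "S``{y2} = S``{y1}" using equiv_class_eq[OF eq \<open>(y2, y1) \<in> S\<close>] .
  ultimately show ?thesis using h(2) by auto
qed

lemma det_trans_iff: "(X, l, Y) \<in> aut_trans (det G) \<longleftrightarrow>
   (\<exists>\<sigma>. l = Some \<sigma> \<and> X \<in> det_reach G \<and> \<sigma> \<in> aut_alph G \<and> Y = det_step G X \<sigma> \<and> Y \<noteq> {})"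
  unfolding det_def by auto

lemma det_trans_states: "(X, l, Y) \<in> aut_trans (det G) \<Longrightarrow> X \<in> det_reach G \<and> Y \<in> det_reach G"
  unfolding det_trans_iff by (auto intro: det_reach.dr_step)

lemma det_states: "aut_states (det G) = det_reach G" unfolding det_def by simp
lemma det_init: "aut_init (det G) = {det_init G}" unfolding det_def by simp

lemma rr_trans: "(x, l, y) \<in> aut_trans (restrict_reach A K) \<longleftrightarrow>
   (x, l, y) \<in> aut_trans A \<and> x \<in> reach_within A K \<and> y \<in> reach_within A K"
  unfolding restrict_reach_def by simp

lemma rr_init: "aut_init (restrict_reach A K) = aut_init A \<inter> reach_within A K"
  unfolding restrict_reach_def by simp

lemma rw_K: "x \<in> reach_within A K \<Longrightarrow> x \<in> K"
  by (induction rule: reach_within.induct) auto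

lemma rw_det: "X \<in> reach_within (det G) K \<Longrightarrow> X \<in> det_reach G"
proof (induction rule: reach_within.induct)
  case (rw_init x) then show ?case using det_reach.dr_init[of G] by (simp add: det_init)
next
  case (rw_step x l y) then show ?case using det_trans_states by blast
qed

context
  fixes G :: "('a, 'q) aut" and QS :: "'q set" and R :: "('q \<times> 'q) set"
  assumes aut: "automaton G" and QSs: "QS \<subseteq> aut_states G"
    and oe: "opaque_obs_equiv G QS R"
begin

lemma det_fwd: assumes "(X, Some \<sigma>, Y) \<in> aut_trans (det G)"
  shows "((\<lambda>x. R``{x}) ` X, Some \<sigma>, (\<lambda>x. R``{x}) ` Y) \<in> aut_trans (det (quotient G R))"
proof -
  have h: "X \<in> det_reach G" "\<sigma> \<in> aut_alph G" "Y = det_step G X \<sigma>" "Y \<noteq> {}"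
    using assms unfolding det_trans_iff by auto
  have e: "det_step (quotient G R) ((\<lambda>x. R``{x}) ` X) \<sigma> = (\<lambda>x. R``{x}) ` Y"
    using step_quot'[OF aut QSs oe h(1)] h(3) by simp
  have "(\<lambda>x. R``{x}) ` X \<in> det_reach (quotient G R)" using reach_quot[OF aut QSs oe] h(1) by blast
  moreover have "aut_alph (quotient G R) = aut_alph G" by (rule alph_quot[OF aut QSs oe])
  ultimately show ?thesis unfolding det_trans_iff using e h by auto
qed

lemma det_bwd: assumes "X \<in> det_reach G"
   "((\<lambda>x. R``{x}) ` X, Some \<sigma>, Z) \<in> aut_trans (det (quotient G R))"
  shows "\<exists>Y. Z = (\<lambda>x. R``{x}) ` Y \<and> (X, Some \<sigma>, Y) \<in> aut_trans (det G)"
proof -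
  have h: "\<sigma> \<in> aut_alph (quotient G R)" "Z = det_step (quotient G R) ((\<lambda>x. R``{x}) ` X) \<sigma>" "Z \<noteq> {}"
    using assms(2) unfolding det_trans_iff by auto
  have e: "Z = (\<lambda>x. R``{x}) ` (det_step G X \<sigma>)"
    using step_quot'[OF aut QSs oe assms(1)] h(2) by simp
  have "(X, Some \<sigma>, det_step G X \<sigma>) \<in> aut_trans (det G)"
    unfolding det_trans_iff using assms(1) h(1,3) e alph_quot[OF aut QSs oe] by auto
  thus ?thesis using e by blast
qed

end



lemma ob_secret: "opaque_bisim A QS S \<Longrightarrow> (X1, X2) \<in> S \<Longrightarrow> (X1 \<subseteq> QS \<longleftrightarrow> X2 \<subseteq> QS)"
  unfolding opaque_bisim_def by blast

theorem theorem3: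
  fixes G :: "('a, 'q) aut" and QS :: "'q set"
    and R :: "('q \<times> 'q) set"
    and Rob Rb :: "('q set set \<times> 'q set set) set"
  assumes "automaton G"
    and "QS \<subseteq> aut_states G"
    and "\<not> UR G (aut_init G) \<subseteq> QS"
    and "opaque_obs_equiv G QS R"
    and "opaque_bisim (det (quotient G R)) {R `` {x} | x. x \<in> QS} Rob"
    and "bisimulation (det (quotient G R)) Rb"
  shows "\<forall>\<omega>. \<omega> \<in> tpo_paths (det_d G QS) (det G) \<longleftrightarrow>
           \<omega> \<in> tpo_paths
                 (restrict_reach (quotient (det (quotient G R)) Rob)
                    {C. \<not> (\<exists>X\<in>C. X \<subseteq> {R `` {x} | x. x \<in> QS})})
                 (quotient (det (quotient G R)) Rb)"
proof -
  note aut = assms(1) and QSs = assms(2) and ns = assms(3) and oe = assms(4)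
    and ob = assms(5) and bb = assms(6)
  define phi :: "'q set \<Rightarrow> 'q set set" where "phi X = (\<lambda>x. R``{x}) ` X" for X
  define DQ where "DQ = det (quotient G R)"
  define QSq where "QSq = {R `` {x} | x. x \<in> QS}"
  define HB where "HB = quotient DQ Rb"
  define HOB where "HOB = quotient DQ Rob"
  define K1 where "K1 = {X. \<not> X \<subseteq> QS}"
  define K2 where "K2 = {C. \<not> (\<exists>X\<in>C. X \<subseteq> QSq)}"
  define D' where "D' = restrict_reach HOB K2"
  define DD where "DD = restrict_reach (det G) K1"
  have DDeq: "det_d G QS = DD" unfolding DD_def K1_def det_d_def by simp

  have fwd: "(phi X, Some \<sigma>, phi Y) \<in> aut_trans DQ" if "(X, Some \<sigma>, Y) \<in> aut_trans (det G)" for X Y \<sigma>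
    using det_fwd[OF aut QSs oe that] unfolding phi_def DQ_def .
  have bwd: "\<exists>Y. Z = phi Y \<and> (X, Some \<sigma>, Y) \<in> aut_trans (det G)"
    if "X \<in> det_reach G" "(phi X, Some \<sigma>, Z) \<in> aut_trans DQ" for X Z \<sigma>
    using det_bwd[OF aut QSs oe that(1)] that(2) unfolding phi_def DQ_def by blast
  have reachQ: "phi X \<in> aut_states DQ" if "X \<in> det_reach G" for X
    using reach_quot[OF aut QSs oe] that unfolding phi_def DQ_def det_states by blast
  have initQ: "aut_init DQ = {phi (det_init G)}"
    using init_quot[OF aut QSs oe] unfolding phi_def DQ_def det_init by simp
  have tsDQ: "x \<in> aut_states DQ" if "(x, l, y) \<in> aut_trans DQ" for x l y
    using det_trans_states[OF that[unfolded DQ_def]] unfolding DQ_def det_states by blast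
  have tsDQ': "\<forall>x l y. (x, l, y) \<in> aut_trans DQ \<longrightarrow> x \<in> aut_states DQ" using tsDQ by blast
  have sbB: "stepbis DQ Rb" using bisim_stepbis[OF bb] unfolding DQ_def .
  have sbO: "stepbis DQ Rob" using obisim_stepbis[OF ob] unfolding DQ_def .
  have dinit_reach: "det_init G \<in> det_reach G" by (rule det_reach.dr_init)
  have dinitK1: "det_init G \<in> K1" using ns unfolding K1_def det_init_def by simp

  define SF where "SF = {(X, Rb``{phi X}) | X. X \<in> det_reach G}"
  have simF1: "simrel (det G) HB SF"
    unfolding simrel_def
  proof (intro allI impI)
    fix X C \<sigma> Y assume h: "(X, C) \<in> SF" "(X, Some \<sigma>, Y) \<in> aut_trans (det G)"
    have "(C, Some \<sigma>, Rb``{phi Y}) \<in> aut_trans HB"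
      using quot_fwd[OF fwd[OF h(2)]] h(1) unfolding HB_def SF_def by auto
    moreover have "Y \<in> det_reach G" using det_trans_states[OF h(2)] by blast
    ultimately show "\<exists>e'. (C, Some \<sigma>, e') \<in> aut_trans HB \<and> (Y, e') \<in> SF"
      unfolding SF_def by blast
  qed
  have simF2: "simrel HB (det G) (SF\<inverse>)"
    unfolding simrel_def
  proof (intro allI impI)
    fix C X \<sigma> C' assume h: "(C, X) \<in> SF\<inverse>" "(C, Some \<sigma>, C') \<in> aut_trans HB"
    have X: "X \<in> det_reach G" "C = Rb``{phi X}" using h(1) unfolding SF_def by auto
    obtain y where y: "(phi X, Some \<sigma>, y) \<in> aut_trans DQ" "C' = Rb``{y}"
      using quot_back[OF sbB reachQ[OF X(1)] tsDQ'] h(2) X(2) unfolding HB_def by blast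
    obtain Y where Y: "y = phi Y" "(X, Some \<sigma>, Y) \<in> aut_trans (det G)" using bwd[OF X(1) y(1)] by blast
    have "Y \<in> det_reach G" using det_trans_states[OF Y(2)] by blast
    thus "\<exists>e'. (X, Some \<sigma>, e') \<in> aut_trans (det G) \<and> (C', e') \<in> SF\<inverse>"
      using Y y(2) unfolding SF_def by blast
  qed
  have initHB: "aut_init HB = {Rb``{phi (det_init G)}}" unfolding HB_def quot_init initQ by simp
  have iF1: "\<forall>f\<in>aut_init (det G). \<exists>f'\<in>aut_init HB. (f, f') \<in> SF"
    unfolding initHB det_init SF_def using dinit_reach by blast
  have iF2: "\<forall>f\<in>aut_init HB. \<exists>f'\<in>aut_init (det G). (f, f') \<in> SF\<inverse>"
    unfolding initHB det_init SF_def using dinit_reach by blast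

  have Kchar: "Rob``{phi X} \<in> K2 \<longleftrightarrow> X \<in> K1" if "X \<in> det_reach G" for X
  proof -
    have eqO: "equiv (aut_states DQ) Rob" using sbO unfolding stepbis_def by blast
    have pX: "phi X \<in> aut_states DQ" using reachQ[OF that] .
    have self: "phi X \<in> Rob``{phi X}" using equiv_class_self[OF eqO pX] .
    have same: "phi X \<subseteq> QSq \<longleftrightarrow> Z \<subseteq> QSq" if "Z \<in> Rob``{phi X}" for Z
    proof -
      have "(phi X, Z) \<in> Rob" using that by simp
      from ob_secret[OF ob this] show ?thesis unfolding QSq_def .
    qed
    have e1: "(\<exists>Z\<in>Rob``{phi X}. Z \<subseteq> QSq) \<longleftrightarrow> phi X \<subseteq> QSq"
    proof
      assume "\<exists>Z\<in>Rob``{phi X}. Z \<subseteq> QSq"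
      then obtain Z where "Z \<in> Rob``{phi X}" "Z \<subseteq> QSq" by blast
      thus "phi X \<subseteq> QSq" using same by blast
    next
      assume "phi X \<subseteq> QSq"
      thus "\<exists>Z\<in>Rob``{phi X}. Z \<subseteq> QSq" using self by blast
    qed
    have Xs: "X \<subseteq> aut_states G" using det_reach_props[OF aut that] by blast
    have e2: "phi X \<subseteq> QSq \<longleftrightarrow> X \<subseteq> QS"
      using secret_quot[OF aut QSs oe Xs] unfolding phi_def QSq_def .
    have "Rob``{phi X} \<in> K2 \<longleftrightarrow> \<not> (\<exists>Z\<in>Rob``{phi X}. Z \<subseteq> QSq)" unfolding K2_def by simp
    also have "\<dots> \<longleftrightarrow> \<not> X \<subseteq> QS" using e1 e2 by simp
    finally show ?thesis unfolding K1_def by simp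
  qed
  have rwmap: "Rob``{phi X} \<in> reach_within HOB K2" if "X \<in> reach_within (det G) K1" for X
    using that
  proof (induction rule: reach_within.induct)
    case (rw_init x)
    then have x: "x = det_init G" unfolding det_init by simp
    have "Rob``{phi x} \<in> aut_init HOB" unfolding HOB_def quot_init initQ x by simp
    moreover have "Rob``{phi x} \<in> K2" using Kchar[OF dinit_reach] dinitK1 x by simp
    ultimately show ?case by (rule reach_within.rw_init)
  next
    case (rw_step x l y)
    obtain \<sigma> where l: "l = Some \<sigma>" using rw_step(2) unfolding det_trans_iff by blast
    have "(Rob``{phi x}, l, Rob``{phi y}) \<in> aut_trans HOB"
      using quot_fwd[OF fwd[OF rw_step(2)[unfolded l]]] l unfolding HOB_def by simp
    moreover have "y \<in> det_reach G" using det_trans_states[OF rw_step(2)] by blast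
    hence "Rob``{phi y} \<in> K2" using Kchar rw_step(3) by blast
    ultimately show ?case using rw_step(4) by (rule reach_within.rw_step[rotated])
  qed
  define SD where "SD = {(X, Rob``{phi X}) | X. X \<in> reach_within (det G) K1}"
  have simD1: "simrel DD D' SD"
    unfolding simrel_def
  proof (intro allI impI)
    fix X C \<sigma> Y assume h: "(X, C) \<in> SD" "(X, Some \<sigma>, Y) \<in> aut_trans DD"
    have X: "X \<in> reach_within (det G) K1" "C = Rob``{phi X}" using h(1) unfolding SD_def by auto
    have t: "(X, Some \<sigma>, Y) \<in> aut_trans (det G)" "Y \<in> reach_within (det G) K1"
      using h(2) unfolding DD_def rr_trans by auto
    have "(C, Some \<sigma>, Rob``{phi Y}) \<in> aut_trans HOB"
      using quot_fwd[OF fwd[OF t(1)]] X(2) unfolding HOB_def by simp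
    hence "(C, Some \<sigma>, Rob``{phi Y}) \<in> aut_trans D'"
      unfolding D'_def rr_trans using rwmap[OF X(1)] rwmap[OF t(2)] X(2) by simp
    moreover have "(Y, Rob``{phi Y}) \<in> SD" using t(2) unfolding SD_def by blast
    ultimately show "\<exists>e'. (C, Some \<sigma>, e') \<in> aut_trans D' \<and> (Y, e') \<in> SD" by blast
  qed
  have simD2: "simrel D' DD (SD\<inverse>)"
    unfolding simrel_def
  proof (intro allI impI)
    fix C X \<sigma> C' assume h: "(C, X) \<in> SD\<inverse>" "(C, Some \<sigma>, C') \<in> aut_trans D'"
    have X: "X \<in> reach_within (det G) K1" "C = Rob``{phi X}" using h(1) unfolding SD_def by auto
    have Xr: "X \<in> det_reach G" using rw_det[OF X(1)] .
    have t: "(C, Some \<sigma>, C') \<in> aut_trans HOB" "C' \<in> reach_within HOB K2"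
      using h(2) unfolding D'_def rr_trans by auto
    obtain y where y: "(phi X, Some \<sigma>, y) \<in> aut_trans DQ" "C' = Rob``{y}"
      using quot_back[OF sbO reachQ[OF Xr] tsDQ'] t(1) X(2) unfolding HOB_def by blast
    obtain Y where Y: "y = phi Y" "(X, Some \<sigma>, Y) \<in> aut_trans (det G)" using bwd[OF Xr y(1)] by blast
    have Yr: "Y \<in> det_reach G" using det_trans_states[OF Y(2)] by blast
    have "C' \<in> K2" using rw_K[OF t(2)] .
    hence YK: "Y \<in> K1" using Kchar[OF Yr] y(2) Y(1) by simp
    have Yrw: "Y \<in> reach_within (det G) K1" by (rule reach_within.rw_step[OF X(1) Y(2) YK])
    have "(X, Some \<sigma>, Y) \<in> aut_trans DD" unfolding DD_def rr_trans using Y(2) X(1) Yrw by simp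
    moreover have "(C', Y) \<in> SD\<inverse>" using Yrw y(2) Y(1) unfolding SD_def by blast
    ultimately show "\<exists>e'. (X, Some \<sigma>, e') \<in> aut_trans DD \<and> (C', e') \<in> SD\<inverse>" by blast
  qed
  have dinit_rw: "det_init G \<in> reach_within (det G) K1"
    by (rule reach_within.rw_init) (simp_all add: det_init dinitK1)
  have initDD: "aut_init DD = {det_init G}" unfolding DD_def rr_init det_init using dinit_rw by auto
  have initD': "aut_init D' = {Rob``{phi (det_init G)}}"
    unfolding D'_def rr_init HOB_def quot_init initQ using rwmap[OF dinit_rw] unfolding HOB_def by auto
  have iD1: "\<forall>d\<in>aut_init DD. \<exists>d'\<in>aut_init D'. (d, d') \<in> SD"
    unfolding initDD initD' SD_def using dinit_rw by blast
  have iD2: "\<forall>d\<in>aut_init D'. \<exists>d'\<in>aut_init DD. (d, d') \<in> SD\<inverse>"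
    unfolding initDD initD' SD_def using dinit_rw by blast

  have "tpo_paths DD (det G) \<subseteq> tpo_paths D' HB" by (rule tpo_paths_sim[OF simD1 simF1 iD1 iF1])
  moreover have "tpo_paths D' HB \<subseteq> tpo_paths DD (det G)" by (rule tpo_paths_sim[OF simD2 simF2 iD2 iF2])
  ultimately have "tpo_paths DD (det G) = tpo_paths D' HB" by blast
  thus ?thesis unfolding DDeq D'_def HOB_def HB_def K2_def QSq_def DQ_def by blast
qed

end
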